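(* In the call-by-value $\lambda$-calculus, contextual equivalence and evaluation-contextual equivalence coincide: for all $M,N\in\Lambda^\bullet$, $M\simeq^v N$ if and only if $M\cong^v N$.
   Context: $\Lambda^\bullet$ is the set of closed $\lambda$-terms; values are closed abstractions $\lambda x.P$. Call-by-value reduction $\longrightarrow$ on closed terms is given by: $MN\longrightarrow MN'$ if $N\longrightarrow N'$; $MV\longrightarrow M'V$ if $M\longrightarrow M'$ and $V$ is a value; $(\lambda x.P)V\longrightarrow P[V/x]$ if $V$ is a value. $\Longrightarrow$ is the reflexive transitive closure; $M{\Downarrow}$ means $M\Longrightarrow V$ for some value $V$. Contexts are generated by $C::=x\mid[\cdot]\mid C\,C\mid\lambda x.C$ and $C[M]$ fills every hole with $M$ (capture allowed). $M\simeq^v N$ iff for all contexts $C$ with $C[M],C[N]$ closed, $C[M]{\Downarrow}\iff C[N]{\Downarrow}$. Call-by-value evaluation contexts are $\mathcal{E}::=[\cdot]\mid M\,\mathcal{E}\mid\mathcal{E}\,V$ with $M\in\Lambda^\bullet$ and $V$ a value; $M\cong^v N$ iff for all evaluation contexts $\mathcal{E}$, $\mathcal{E}[M]{\Downarrow}\iff\mathcal{E}[N]{\Downarrow}$. *)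

theory Defs
  imports Main
begin

datatype trm = Var nat | App trm trm | Lam nat trm

fun fv :: "trm \<Rightarrow> nat set" where
  "fv (Var x) = {x}"
| "fv (App M N) = fv M \<union> fv N"
| "fv (Lam x M) = fv M - {x}"

definition closed :: "trm \<Rightarrow> bool" where
  "closed M \<longleftrightarrow> fv M = {}"

definition is_value :: "trm \<Rightarrow> bool" where
  "is_value V \<longleftrightarrow> closed V \<and> (\<exists>x P. V = Lam x P)"

text \<open>Substitution P[V/x]; it is only ever used with closed V, so no capture can occur.\<close>
fun subst :: "trm \<Rightarrow> trm \<Rightarrow> nat \<Rightarrow> trm" where
  "subst (Var y) V x = (if y = x then V else Var y)"
| "subst (App M N) V x = App (subst M V x) (subst N V x)"
| "subst (Lam y P) V x = (if y = x then Lam y P else Lam y (subst P V x))"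

text \<open>Call-by-value (right-to-left) reduction.\<close>
inductive cbv_step :: "trm \<Rightarrow> trm \<Rightarrow> bool" where
  argR: "cbv_step N N' \<Longrightarrow> cbv_step (App M N) (App M N')"
| funL: "cbv_step M M' \<Longrightarrow> is_value V \<Longrightarrow> cbv_step (App M V) (App M' V)"
| beta: "is_value V \<Longrightarrow> cbv_step (App (Lam x P) V) (subst P V x)"

definition converges :: "trm \<Rightarrow> bool" where
  "converges M \<longleftrightarrow> (\<exists>V. cbv_step\<^sup>*\<^sup>* M V \<and> is_value V)"

text \<open>General contexts; filling allows capture.\<close>
datatype ctx = CVar nat | Hole | CApp ctx ctx | CLam nat ctx

fun fill :: "ctx \<Rightarrow> trm \<Rightarrow> trm" where
  "fill (CVar x) M = Var x"
| "fill Hole M = M"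
| "fill (CApp C D) M = App (fill C M) (fill D M)"
| "fill (CLam x C) M = Lam x (fill C M)"

definition ctx_equiv :: "trm \<Rightarrow> trm \<Rightarrow> bool" where
  "ctx_equiv M N \<longleftrightarrow>
     (\<forall>C. closed (fill C M) \<and> closed (fill C N) \<longrightarrow>
          (converges (fill C M) \<longleftrightarrow> converges (fill C N)))"

datatype ectx = EHole | EArg trm ectx | EFun ectx trm

fun wf_ectx :: "ectx \<Rightarrow> bool" where
  "wf_ectx EHole = True"
| "wf_ectx (EArg M E) = (closed M \<and> wf_ectx E)"
| "wf_ectx (EFun E V) = (wf_ectx E \<and> is_value V)"

fun efill :: "ectx \<Rightarrow> trm \<Rightarrow> trm" where
  "efill EHole M = M"
| "efill (EArg N E) M = App N (efill E M)"
| "efill (EFun E V) M = App (efill E M) V"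

definition ectx_equiv :: "trm \<Rightarrow> trm \<Rightarrow> bool" where
  "ectx_equiv M N \<longleftrightarrow>
     (\<forall>E. wf_ectx E \<longrightarrow> (converges (efill E M) \<longleftrightarrow> converges (efill E N)))"

end

theory Submission
  imports Defs
begin

fun cfv :: "ctx \<Rightarrow> nat set" where
  "cfv (CVar x) = {x}"
| "cfv Hole = {}"
| "cfv (CApp C D) = cfv C \<union> cfv D"
| "cfv (CLam x C) = cfv C - {x}"

fun holes :: "ctx \<Rightarrow> nat" where
  "holes (CVar x) = 0"
| "holes Hole = 1"
| "holes (CApp C D) = holes C + holes D"
| "holes (CLam x C) = holes C"

fun ctxof :: "trm \<Rightarrow> ctx" where
  "ctxof (Var x) = CVar x"
| "ctxof (App M N) = CApp (ctxof M) (ctxof N)"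
| "ctxof (Lam x M) = CLam x (ctxof M)"

lemma fill_ctxof[simp]: "fill (ctxof T) K = T"
  by (induction T) auto
lemma cfv_ctxof[simp]: "cfv (ctxof T) = fv T"
  by (induction T) auto
lemma holes_ctxof[simp]: "holes (ctxof T) = 0"
  by (induction T) auto

lemma fv_fill: "closed K \<Longrightarrow> fv (fill C K) = cfv C"
  by (induction C) (auto simp: closed_def)

fun csubst :: "ctx \<Rightarrow> ctx \<Rightarrow> nat \<Rightarrow> ctx" where
  "csubst (CVar y) D x = (if y = x then D else CVar y)"
| "csubst Hole D x = Hole"
| "csubst (CApp C1 C2) D x = CApp (csubst C1 D x) (csubst C2 D x)"
| "csubst (CLam y C) D x = (if y = x then CLam y C else CLam y (csubst C D x))"

lemma subst_nofv: "x \<notin> fv T \<Longrightarrow> subst T V x = T"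
  by (induction T) auto

lemma fill_csubst: "closed K \<Longrightarrow> fill (csubst C D x) K = subst (fill C K) (fill D K) x"
  by (induction C) (auto simp: closed_def subst_nofv)

lemma cfv_csubst: "cfv (csubst C D x) \<subseteq> (cfv C - {x}) \<union> cfv D"
  by (induction C) auto

datatype cectx = CEHole | CEArg ctx cectx | CEFun cectx ctx

fun cefill :: "cectx \<Rightarrow> ctx \<Rightarrow> ctx" where
  "cefill CEHole X = X"
| "cefill (CEArg D E) X = CApp D (cefill E X)"
| "cefill (CEFun E D) X = CApp (cefill E X) D"

fun toE :: "cectx \<Rightarrow> trm \<Rightarrow> ectx" where
  "toE CEHole K = EHole"
| "toE (CEArg D E) K = EArg (fill D K) (toE E K)"
| "toE (CEFun E D) K = EFun (toE E K) (fill D K)"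

fun good :: "cectx \<Rightarrow> bool" where
  "good CEHole = True"
| "good (CEArg D E) = (cfv D = {} \<and> good E)"
| "good (CEFun E D) = (good E \<and> cfv D = {} \<and> (\<exists>x Q. D = CLam x Q))"

lemma fill_cefill: "fill (cefill E X) K = efill (toE E K) (fill X K)"
  by (induction E) auto

lemma holes_cefill: "holes (cefill E X) + 1 = holes (cefill E Hole) + holes X"
  by (induction E) auto

lemma holes_cefill_pos: "holes (cefill E Hole) \<ge> 1"
  by (induction E) auto

lemma cfv_cefill: "cfv (cefill E X) = cfv (cefill E Hole) \<union> cfv X"
  by (induction E) auto

lemma good_wf: "good E \<Longrightarrow> closed K \<Longrightarrow> wf_ectx (toE E K)"
  by (induction E) (auto simp: closed_def fv_fill is_value_def)

lemma no_step_Var: "\<not> cbv_step (Var x) T"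
  by (auto elim: cbv_step.cases)
lemma no_step_Lam: "\<not> cbv_step (Lam x P) T"
  by (auto elim: cbv_step.cases)

lemma fill_Lam: "fill C K = Lam x P \<Longrightarrow> C = Hole \<or> (\<exists>Q. C = CLam x Q \<and> P = fill Q K)"
  by (cases C) auto

lemma classify:
  assumes "closed M" "closed N"
  shows "cfv C = {} \<Longrightarrow> cbv_step (fill C M) T \<Longrightarrow>
    (\<exists>E. C = cefill E Hole \<and> good E) \<or>
    (\<exists>C'. T = fill C' M \<and> cbv_step (fill C N) (fill C' N) \<and> cfv C' = {})"
proof (induction C arbitrary: T)
  case (CVar x) then show ?case by simp
next
  case Hole
  have "Hole = cefill CEHole Hole" by simp
  then show ?case by fastforce
next
  case (CLam x C) then show ?case by (simp add: no_step_Lam)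
next
  case (CApp C1 C2)
  from CApp.prems(2) show ?case
  proof (cases rule: cbv_step.cases)
    case (argR B0 B' A0)
    then have argR: "T = App (fill C1 M) B'" "cbv_step (fill C2 M) B'" by auto
    from CApp.IH(2)[OF _ argR(2)] CApp.prems(1)
    consider (a) E where "C2 = cefill E Hole" "good E"
      | (b) C' where "B' = fill C' M" "cbv_step (fill C2 N) (fill C' N)" "cfv C' = {}"
      by auto
    then show ?thesis
    proof cases
      case a
      then have "CApp C1 C2 = cefill (CEArg C1 E) Hole \<and> good (CEArg C1 E)"
        using CApp.prems(1) by simp
      then show ?thesis by blast
    next
      case b
      then show ?thesis using argR CApp.prems(1)
        by (intro disjI2 exI[of _ "CApp C1 C'"]) (auto intro: cbv_step.argR)
    qed
  next
    case (funL A0 A' V0)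
    then have funL: "T = App A' (fill C2 M)" "cbv_step (fill C1 M) A'" "is_value (fill C2 M)" by auto
    show ?thesis
    proof (cases "C2 = Hole")
      case True
      then have "CApp C1 C2 = cefill (CEArg C1 CEHole) Hole \<and> good (CEArg C1 CEHole)"
        using CApp.prems(1) by simp
      then show ?thesis by blast
    next
      case False
      from funL(3) obtain y P where "fill C2 M = Lam y P" by (auto simp: is_value_def)
      with False obtain Q where Q: "C2 = CLam y Q" using fill_Lam by blast
      have vN: "is_value (fill C2 N)"
        using Q CApp.prems(1) assms by (auto simp: is_value_def closed_def fv_fill)
      from CApp.IH(1)[OF _ funL(2)] CApp.prems(1)
      consider (a) E where "C1 = cefill E Hole" "good E"
        | (b) C' where "A' = fill C' M" "cbv_step (fill C1 N) (fill C' N)" "cfv C' = {}"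
        by auto
      then show ?thesis
      proof cases
        case a
        then have "CApp C1 C2 = cefill (CEFun E C2) Hole \<and> good (CEFun E C2)"
          using CApp.prems(1) Q by simp
        then show ?thesis by blast
      next
        case b
        then show ?thesis using funL CApp.prems(1) vN
          by (intro disjI2 exI[of _ "CApp C' C2"]) (auto intro: cbv_step.funL)
      qed
    qed
  next
    case (beta V0 x P)
    then have beta: "fill C1 M = Lam x P" "T = subst P (fill C2 M) x" "is_value (fill C2 M)" by auto
    show ?thesis
    proof (cases "C2 = Hole")
      case True
      then have "CApp C1 C2 = cefill (CEArg C1 CEHole) Hole \<and> good (CEArg C1 CEHole)"
        using CApp.prems(1) by simp
      then show ?thesis by blast
    next
      case False
      from beta(3) obtain y P2 where "fill C2 M = Lam y P2" by (auto simp: is_value_def)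
      with False obtain Q where Q: "C2 = CLam y Q" using fill_Lam by blast
      have vN: "is_value (fill C2 N)"
        using Q CApp.prems(1) assms by (auto simp: is_value_def closed_def fv_fill)
      show ?thesis
      proof (cases "C1 = Hole")
        case True
        then have "CApp C1 C2 = cefill (CEFun CEHole C2) Hole \<and> good (CEFun CEHole C2)"
          using CApp.prems(1) Q by simp
        then show ?thesis by blast
      next
        case False
        with beta(1) obtain P' where P': "C1 = CLam x P'" "P = fill P' M"
          using fill_Lam by blast
        have "T = fill (csubst P' C2 x) M"
          using beta(2) P' fill_csubst[OF assms(1)] by simp
        moreover have "cbv_step (fill (CApp C1 C2) N) (fill (csubst P' C2 x) N)"
          using P' vN fill_csubst[OF assms(2)] by (auto intro: cbv_step.beta)
        moreover have "cfv (csubst P' C2 x) = {}"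
          using cfv_csubst[of P' C2 x] CApp.prems(1) P' by auto
        ultimately show ?thesis by blast
      qed
    qed
  qed
qed

definition approx :: "trm \<Rightarrow> trm \<Rightarrow> bool" where
  "approx M N \<longleftrightarrow> (\<forall>E. wf_ectx E \<longrightarrow> converges (efill E M) \<longrightarrow> converges (efill E N))"

lemma main:
  assumes M: "closed M" and N: "closed N" and ap: "approx M N"
  shows "cfv C = {} \<Longrightarrow> (cbv_step ^^ n) (fill C M) V \<Longrightarrow> is_value V \<Longrightarrow> converges (fill C N)"
proof (induction n arbitrary: C V rule: less_induct)
  case (less n)
  show ?case using less.prems
  proof (induction "holes C" arbitrary: C V rule: less_induct)
    case IH2: less
    show ?case
    proof (cases n)
      case 0
      with IH2.prems have v: "is_value (fill C M)" by simp
      then obtain x P where "fill C M = Lam x P" by (auto simp: is_value_def)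
      then consider "C = Hole" | Q where "C = CLam x Q" using fill_Lam by blast
      then show ?thesis
      proof cases
        case 1
        have "converges M" using v 1 by (auto simp: converges_def)
        then have "converges N" using ap by (auto simp: approx_def dest: spec[of _ EHole])
        then show ?thesis using 1 by simp
      next
        case 2
        have "is_value (fill C N)" using 2 IH2.prems(1) N
          by (auto simp: is_value_def closed_def fv_fill)
        then show ?thesis by (auto simp: converges_def)
      qed
    next
      case (Suc m)
      with IH2.prems(2) obtain T where T: "cbv_step (fill C M) T" "(cbv_step ^^ m) T V"
        using relpowp_Suc_D2 by metis
      from classify[OF M N IH2.prems(1) T(1)]
      consider (a) E where "C = cefill E Hole" "good E"
        | (b) C' where "T = fill C' M" "cbv_step (fill C N) (fill C' N)" "cfv C' = {}"
        by blast
      then show ?thesis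
      proof cases
        case b
        have "converges (fill C' N)"
          using less.IH[of m C' V] Suc b T IH2.prems by auto
        then show ?thesis using b(2)
          by (auto simp: converges_def intro: converse_rtranclp_into_rtranclp)
      next
        case a
        define D where "D = cefill E (ctxof M)"
        have hD: "holes D < holes C"
          using a holes_cefill[of E "ctxof M"] holes_cefill_pos[of E] by (simp add: D_def)
        have fD: "fill D M = fill C M"
          using a by (simp add: D_def fill_cefill)
        have cD: "cfv D = {}"
          using a IH2.prems(1) M cfv_cefill[of E "ctxof M"] by (simp add: D_def closed_def)
        have "converges (fill D N)"
          using IH2.hyps[OF hD cD] fD IH2.prems by simp
        then have "converges (efill (toE E N) M)" by (simp add: D_def fill_cefill)
        moreover have "wf_ectx (toE E N)" using good_wf a N by simp
        ultimately have "converges (efill (toE E N) N)" using ap by (auto simp: approx_def)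
        then show ?thesis using a by (simp add: fill_cefill)
      qed
    qed
  qed
qed

lemma main2:
  assumes "closed M" "closed N" "approx M N" "closed (fill C M)" "converges (fill C M)"
  shows "converges (fill C N)"
proof -
  from assms(5) obtain V n where "(cbv_step ^^ n) (fill C M) V" "is_value V"
    by (auto simp: converges_def rtranclp_power)
  moreover have "cfv C = {}" using assms(1,4) by (simp add: closed_def fv_fill)
  ultimately show ?thesis using main[OF assms(1-3)] by blast
qed

fun e2c :: "ectx \<Rightarrow> ctx" where
  "e2c EHole = Hole"
| "e2c (EArg K E) = CApp (ctxof K) (e2c E)"
| "e2c (EFun E V) = CApp (e2c E) (ctxof V)"

lemma fill_e2c: "fill (e2c E) M = efill E M"
  by (induction E) auto

lemma closed_efill: "wf_ectx E \<Longrightarrow> closed M \<Longrightarrow> closed (efill E M)"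
  by (induction E) (auto simp: closed_def is_value_def)

theorem mainTheorem12:
  assumes "closed M" and "closed N"
  shows "ctx_equiv M N \<longleftrightarrow> ectx_equiv M N"
proof
  assume h: "ctx_equiv M N"
  show "ectx_equiv M N"
    unfolding ectx_equiv_def
  proof (intro allI impI)
    fix E assume "wf_ectx E"
    then have "closed (fill (e2c E) M)" "closed (fill (e2c E) N)"
      using assms closed_efill by (simp_all add: fill_e2c)
    then have "converges (fill (e2c E) M) = converges (fill (e2c E) N)"
      using h unfolding ctx_equiv_def by blast
    then show "converges (efill E M) = converges (efill E N)"
      by (simp add: fill_e2c)
  qed
next
  assume h: "ectx_equiv M N"
  have a1: "approx M N" and a2: "approx N M" using h by (auto simp: approx_def ectx_equiv_def)
  show "ctx_equiv M N" unfolding ctx_equiv_def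
    using main2[OF assms a1] main2[OF assms(2,1) a2] by blast
qed

end
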